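(* Let $B>1$, $p>0$, $f_p(x)=x^{2p}e^{-x^2}$, $n\in\mathbb{R}$. For $a>0$ with $2ap+n>-1$, as $j\to\infty$, $$\sum_{l\ge1}f_p^a\Big(\frac{l}{B^j}\Big)l^n=\frac{B^{(n+1)j}}{2a^{ap+\frac{n+1}{2}}}\Gamma\Big(ap+\frac{n+1}{2}\Big)+o\big(B^{(n+1)j}\big).$$ Moreover, for $a_1,a_2>0$ with $2(a_1+a_2)p+n>-1$ and fixed $\Delta j\in\mathbb{Z}$, as $j\to\infty$, $$\sum_{l\ge1}f_p^{a_1}\Big(\frac{l}{B^j}\Big)f_p^{a_2}\Big(\frac{l}{B^{j+\Delta j}}\Big)l^n=\frac{B^{(n+1)j}\,\tau_{p,a_1,a_2}(\Delta j)}{2(a_1+a_2)^{(a_1+a_2)p+\frac{n+1}{2}}}\Gamma\Big((a_1+a_2)p+\frac{n+1}{2}\Big)+o\big(B^{(n+1)j}\big),$$ where $$\tau_{p,a_1,a_2}(\Delta j)=\Big(\frac{a_1B^{\Delta j}+a_2B^{-\Delta j}}{a_1+a_2}\Big)^{-((a_1+a_2)p+\frac{n+1}{2})}B^{\Delta j((a_1-a_2)p+\frac{n+1}{2})}.$$ *)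

theory Defs
  imports "HOL-Analysis.Analysis" "HOL-Library.Landau_Symbols"
begin

text \<open>The function f_p(x) = x^(2p) e^(-x^2) (used only at x > 0).\<close>
definition fp :: "real \<Rightarrow> real \<Rightarrow> real" where
  "fp p x = x powr (2 * p) * exp (- (x\<^sup>2))"

definition tau :: "real \<Rightarrow> real \<Rightarrow> real \<Rightarrow> real \<Rightarrow> real \<Rightarrow> int \<Rightarrow> real" where
  "tau B n p a1 a2 dj =
     ((a1 * B powr (of_int dj) + a2 * B powr (- of_int dj)) / (a1 + a2))
       powr (- ((a1 + a2) * p + (n + 1) / 2))
     * B powr (of_int dj * ((a1 - a2) * p + (n + 1) / 2))"

end

theory Submission
  imports Defs
begin



definition gg :: "real \<Rightarrow> real \<Rightarrow> real \<Rightarrow> real" where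
  "gg s C x = x powr s * exp (- C * x\<^sup>2)"

lemma gint:
  assumes s: "s > -1" and C: "C > 0"
  shows "gg s C absolutely_integrable_on {0<..}"
    "integral {0<..} (gg s C) = Gamma ((s+1)/2) / (2 * C powr ((s+1)/2))"
proof -
  define e where "e = (s+1)/2"
  have e: "e > 0" using s by (simp add: e_def)
  define f where "f = (\<lambda>t::real. t powr (e - 1) / exp t)"
  have "(f has_integral Gamma e) {0..}" unfolding f_def by (rule Gamma_integral_real[OF e])
  hence "((\<lambda>t. if t \<in> {0<..} then f t else 0) has_integral Gamma e) {0..}"
    by (rule has_integral_spike [of "{0}", rotated 2]) auto
  hence fi: "(f has_integral Gamma e) {0<..}" by (subst (asm) has_integral_restrict) auto
  have fa: "f absolutely_integrable_on {0<..}"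
    using fi by (intro nonnegative_absolutely_integrable_1) (auto simp: f_def)
  define G where "G = (\<lambda>x::real. C * x\<^sup>2)"
  have img: "G ` {0<..} = {0<..}"
  proof safe
    fix x :: real assume "x > 0" thus "G x > 0" using C by (simp add: G_def)
  next
    fix y :: real assume y: "y > 0"
    have "G (sqrt (y / C)) = y" using y C by (simp add: G_def)
    moreover have "sqrt (y/C) > 0" using y C by simp
    ultimately show "y \<in> G ` {0<..}" by (metis greaterThan_iff image_eqI)
  qed
  have inj: "inj_on G {0<..}"
    using C by (auto simp: inj_on_def G_def power2_eq_iff_nonneg)
  have der: "(G has_field_derivative 2 * C * x) (at x within {0<..})" for x
    unfolding G_def by (auto intro!: derivative_eq_intros)
  have cv: "(\<lambda>x. \<bar>2 * C * x\<bar> * f (G x)) absolutely_integrable_on {0<..} \<and>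
           integral {0<..} (\<lambda>x. \<bar>2 * C * x\<bar> * f (G x)) = Gamma e"
    using has_absolute_integral_change_of_variables_1'[of "{0<..}" G "\<lambda>x. 2 * C * x" f "Gamma e", OF _ der inj]
    using img fa fi by (auto simp: integral_unique)
  have eq: "\<bar>2 * C * x\<bar> * f (G x) = (2 * C powr e) * gg s C x" if x: "x > 0" for x
  proof -
    have x2: "x\<^sup>2 = x powr 2" using x by (simp add: powr_realpow)
    have "(C * x\<^sup>2) powr (e - 1) = C powr (e - 1) * (x powr 2) powr (e - 1)"
      unfolding x2 using C by (auto intro: powr_mult)
    also have "(x powr 2) powr (e - 1) = x powr (s - 1)"
    proof -
      have "2 * (e - 1) = s - 1" by (simp add: e_def field_simps)
      thus ?thesis by (simp add: powr_powr)
    qed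
    finally have 1: "(C * x\<^sup>2) powr (e - 1) = C powr (e - 1) * x powr (s - 1)" .
    have 2: "C * C powr (e - 1) = C powr e" using C by (simp add: powr_diff)
    have 3: "x * x powr (s - 1) = x powr s" using x by (simp add: powr_diff)
    have "\<bar>2 * C * x\<bar> * f (G x) = 2 * (C * C powr (e - 1)) * (x * x powr (s - 1)) / exp (C * x\<^sup>2)"
      using C x by (simp add: f_def G_def 1)
    also have "\<dots> = 2 * C powr e * x powr s / exp (C * x\<^sup>2)" by (simp only: 2 3)
    also have "\<dots> = (2 * C powr e) * gg s C x" by (simp add: gg_def exp_minus divide_inverse)
    finally show ?thesis .
  qed
  have eq2: "gg s C x = (1 / (2 * C powr e)) * (\<bar>2 * C * x\<bar> * f (G x))" if "x > 0" for x
    using eq[OF that] C by simp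
  have ai: "(\<lambda>x. (1 / (2 * C powr e)) * (\<bar>2 * C * x\<bar> * f (G x))) absolutely_integrable_on {0<..}"
    using cv by (intro set_integrable_mult_right) auto
  show "gg s C absolutely_integrable_on {0<..}"
    using absolutely_integrable_spike[OF ai negligible_empty, of "gg s C"] eq2 by auto
  have "integral {0<..} (gg s C) = integral {0<..} (\<lambda>x. (1 / (2 * C powr e)) * (\<bar>2 * C * x\<bar> * f (G x)))"
    by (rule integral_cong) (simp add: eq2)
  also have "\<dots> = Gamma e / (2 * C powr e)" using cv by simp
  finally show "integral {0<..} (gg s C) = Gamma ((s+1)/2) / (2 * C powr ((s+1)/2))"
    by (simp add: e_def)
qed




lemma ind_int:
  fixes a b :: real
  assumes "0 \<le> a" "a \<le> b"
  shows "(indicator {a<..b} has_integral (b - a)) {0<..}"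
proof -
  have "((\<lambda>x. 1::real) has_integral (b-a)) {a..b}"
    using has_integral_const_real[of "1::real" a b] assms by simp
  hence "((\<lambda>x. if x \<in> {a..b} then 1::real else 0) has_integral (b-a)) UNIV"
    by (simp only: has_integral_restrict_UNIV)
  hence "(indicator {a<..b} has_integral (b-a)) UNIV"
    by (rule has_integral_spike[of "{a}", rotated 2]) (auto simp: indicator_def)
  hence "((\<lambda>x. if x \<in> {0<..} then indicator {a<..b} x else 0) has_integral (b-a)) UNIV"
    by (rule has_integral_eq[rotated]) (use assms in \<open>auto simp: indicator_def\<close>)
  thus ?thesis by (simp only: has_integral_restrict_UNIV)
qed

definition phi :: "real \<Rightarrow> real \<Rightarrow> real \<Rightarrow> real \<Rightarrow> real" where
  "phi s C h x = gg s C (h * of_int \<lceil>x / h\<rceil>)"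

definition psi :: "real \<Rightarrow> real \<Rightarrow> real \<Rightarrow> nat \<Rightarrow> real \<Rightarrow> real" where
  "psi s C h N x = (\<Sum>k<N. gg s C (real (Suc k) * h) * indicator {real k * h<..real (Suc k) * h} x)"

lemma gg_nonneg: "x > 0 \<Longrightarrow> gg s C x \<ge> 0"
  by (simp add: gg_def)

lemma ceil_char:
  fixes h x :: real
  assumes h: "h > 0" and x: "x > 0"
  shows "(real k * h < x \<and> x \<le> real (Suc k) * h) \<longleftrightarrow> k = nat \<lceil>x / h\<rceil> - 1"
proof -
  have c1: "\<lceil>x / h\<rceil> \<ge> 1" using h x by simp
  have "(real k * h < x \<and> x \<le> real (Suc k) * h) \<longleftrightarrow> (real k < x / h \<and> x / h \<le> real k + 1)"
    using h by (simp add: field_simps)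
  also have "\<dots> \<longleftrightarrow> \<lceil>x / h\<rceil> = int k + 1"
    by (simp add: ceiling_eq_iff)
  also have "\<dots> \<longleftrightarrow> k = nat \<lceil>x / h\<rceil> - 1" using c1 by linarith
  finally show ?thesis .
qed

lemma psi_eq:
  fixes h x :: real
  assumes h: "h > 0" and x: "x > 0"
  shows "psi s C h N x = (if nat \<lceil>x / h\<rceil> - 1 < N then phi s C h x else 0)"
proof -
  define k0 where "k0 = nat \<lceil>x / h\<rceil> - 1"
  have c1: "\<lceil>x / h\<rceil> \<ge> 1" using h x by simp
  have k0: "real (Suc k0) * h = h * of_int \<lceil>x / h\<rceil>" using c1 by (simp add: k0_def of_nat_diff)
  have "psi s C h N x = (\<Sum>k<N. if k = k0 then gg s C (real (Suc k) * h) else 0)"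
    unfolding psi_def
    by (rule sum.cong) (use ceil_char[OF h x] in \<open>auto simp: indicator_def k0_def\<close>)
  also have "\<dots> = (if k0 < N then gg s C (real (Suc k0) * h) else 0)"
    by (simp add: sum.delta')
  also have "\<dots> = (if k0 < N then phi s C h x else 0)" using k0 h by (simp add: phi_def mult.commute)
  finally show ?thesis unfolding k0_def .
qed

lemma psi_int:
  assumes h: "h > 0"
  shows "(psi s C h N has_integral h * (\<Sum>k<N. gg s C (real (Suc k) * h))) {0<..}"
proof -
  have "((\<lambda>x. \<Sum>k<N. gg s C (real (Suc k) * h) * indicator {real k * h<..real (Suc k) * h} x)
      has_integral (\<Sum>k<N. gg s C (real (Suc k) * h) * (real (Suc k) * h - real k * h))) {0<..}"
    by (intro has_integral_sum has_integral_mult_right ind_int) (use h in auto)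
  thus ?thesis unfolding psi_def by (simp add: sum_distrib_left algebra_simps)
qed

lemma phi_bounds:
  assumes h: "h > 0" and x: "x > 0"
  shows "x \<le> h * of_int \<lceil>x / h\<rceil>" "h * of_int \<lceil>x / h\<rceil> \<le> x + h"
proof -
  have "x / h \<le> of_int \<lceil>x / h\<rceil>" by (rule le_of_int_ceiling)
  hence "h * (x / h) \<le> h * of_int \<lceil>x / h\<rceil>" using h by (intro mult_left_mono) auto
  thus "x \<le> h * of_int \<lceil>x / h\<rceil>" using h by simp
  have "of_int \<lceil>x / h\<rceil> \<le> x / h + 1" by (rule of_int_ceiling_le_add_one)
  hence "h * of_int \<lceil>x / h\<rceil> \<le> h * (x / h + 1)" using h by (intro mult_left_mono) auto
  thus "h * of_int \<lceil>x / h\<rceil> \<le> x + h" using h by (simp add: distrib_left)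
qed




lemma dom:
  fixes x y s C :: real
  assumes C: "C > 0" and x: "x > 0" and xy: "x \<le> y" "y \<le> x + 1"
  shows "gg s C y \<le> (1 + 2 powr \<bar>s\<bar>) * gg s C x + 2 powr \<bar>s\<bar> * gg 0 C x"
proof -
  define K where "K = 2 powr \<bar>s\<bar>"
  have K: "K \<ge> 0" by (simp add: K_def)
  have xs: "x powr s \<ge> 0" by simp
  have ypow: "y powr s \<le> (1 + K) * x powr s + K"
  proof (cases "s \<le> 0")
    case True
    hence "y powr s \<le> x powr s" using x xy by (intro powr_mono2') auto
    thus ?thesis unfolding distrib_right using K xs mult_nonneg_nonneg[OF K xs] by linarith
  next
    case False
    hence s: "s > 0" by simp
    have 1: "y powr s \<le> (x + 1) powr s" using x xy s by (intro powr_mono2) auto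
    show ?thesis
    proof (cases "x \<le> 1")
      case True
      have "(x + 1) powr s \<le> 2 powr s" using x True s by (intro powr_mono2) auto
      also have "\<dots> = K" using s by (simp add: K_def)
      finally show ?thesis using 1 K xs mult_nonneg_nonneg[OF K xs] unfolding distrib_right by linarith
    next
      case False
      have "(x + 1) powr s \<le> (2 * x) powr s" using x False s by (intro powr_mono2) auto
      also have "\<dots> = K * x powr s" using s x by (simp add: K_def powr_mult)
      finally show ?thesis using 1 K xs mult_nonneg_nonneg[OF K xs] unfolding distrib_right by linarith
    qed
  qed
  have e: "exp (- C * y\<^sup>2) \<le> exp (- C * x\<^sup>2)"
    using C x xy by (auto intro!: mult_left_mono power_mono)
  have "gg s C y = y powr s * exp (- C * y\<^sup>2)" by (simp add: gg_def)
  also have "\<dots> \<le> ((1 + K) * x powr s + K) * exp (- C * x\<^sup>2)"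
    using ypow e K xs by (intro mult_mono) auto
  also have "\<dots> = (1 + K) * gg s C x + K * gg 0 C x"
    using x by (simp add: gg_def algebra_simps)
  finally show ?thesis by (simp add: K_def)
qed

lemma gg_integrable:
  assumes "s > -1" "C > 0"
  shows "gg s C integrable_on {0<..}"
  using gint(1)[OF assms] absolutely_integrable_on_def by blast

lemma step:
  assumes s: "s > -1" and C: "C > 0" and hh: "0 < hh" "hh \<le> 1"
  shows "phi s C hh integrable_on {0<..}"
    "(\<lambda>k. gg s C (real (Suc k) * hh)) sums (integral {0<..} (phi s C hh) / hh)"
    "\<And>x. x > 0 \<Longrightarrow> 0 \<le> phi s C hh x \<and> phi s C hh x \<le>
            (1 + 2 powr \<bar>s\<bar>) * gg s C x + 2 powr \<bar>s\<bar> * gg 0 C x"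
proof -
  define K where "K = 2 powr \<bar>s\<bar>"
  define D where "D = (\<lambda>x. (1 + K) * gg s C x + K * gg 0 C x)"
  have Dint: "D integrable_on {0<..}"
    unfolding D_def using gg_integrable[OF s C] gg_integrable[of 0 C] C
    by (intro integrable_add integrable_on_mult_right) auto
  show phiD: "0 \<le> phi s C hh x \<and> phi s C hh x \<le> (1 + 2 powr \<bar>s\<bar>) * gg s C x + 2 powr \<bar>s\<bar> * gg 0 C x"
    if x: "x > 0" for x
  proof -
    have b: "x \<le> hh * of_int \<lceil>x / hh\<rceil>" "hh * of_int \<lceil>x / hh\<rceil> \<le> x + hh"
      using phi_bounds[OF hh(1) x] by auto
    show ?thesis unfolding phi_def
      using dom[OF C x b(1)] b hh x gg_nonneg[of "hh * of_int \<lceil>x / hh\<rceil>"] by auto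
  qed
  have phiD': "\<And>x. x \<in> {0<..} \<Longrightarrow> phi s C hh x \<le> D x \<and> 0 \<le> phi s C hh x"
    using phiD by (auto simp: D_def K_def)
  have psi_int': "\<And>N. psi s C hh N integrable_on {0<..}"
    using psi_int[OF hh(1)] by blast
  have psi_le: "\<And>N x. x \<in> {0<..} \<Longrightarrow> 0 \<le> psi s C hh N x \<and> psi s C hh N x \<le> D x"
    using phiD' psi_eq[OF hh(1)] by fastforce
  have mc: "phi s C hh integrable_on {0<..} \<and>
      (\<lambda>N. integral {0<..} (psi s C hh N)) \<longlonglongrightarrow> integral {0<..} (phi s C hh)"
  proof (rule monotone_convergence_increasing[OF psi_int'])
    fix N and x :: real assume x: "x \<in> {0<..}"
    show "psi s C hh N x \<le> psi s C hh (Suc N) x"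
      using x psi_eq[OF hh(1), of x s C] phiD'[OF x] by auto
  next
    fix x :: real assume x: "x \<in> {0<..}"
    have "eventually (\<lambda>N. psi s C hh N x = phi s C hh x) sequentially"
      unfolding eventually_sequentially
    proof (intro exI allI impI)
      fix N assume N: "nat \<lceil>x / hh\<rceil> \<le> N"
      have "\<lceil>x / hh\<rceil> \<ge> 1" using x hh by simp
      hence "nat \<lceil>x / hh\<rceil> - 1 < N" using N by linarith
      thus "psi s C hh N x = phi s C hh x" using x psi_eq[OF hh(1), of x s C N] by simp
    qed
    thus "(\<lambda>N. psi s C hh N x) \<longlonglongrightarrow> phi s C hh x" by (rule tendsto_eventually)
  next
    show "bounded (range (\<lambda>N. integral {0<..} (psi s C hh N)))"
    proof (rule boundedI)
      fix y assume "y \<in> range (\<lambda>N. integral {0<..} (psi s C hh N))"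
      then obtain N where y: "y = integral {0<..} (psi s C hh N)" by auto
      have "0 \<le> y" unfolding y using psi_le by (intro integral_nonneg psi_int') auto
      moreover have "y \<le> integral {0<..} D" unfolding y using psi_le
        by (intro integral_le psi_int' Dint) auto
      ultimately show "norm y \<le> integral {0<..} D" by simp
    qed
  qed
  thus "phi s C hh integrable_on {0<..}" by blast
  have "(\<lambda>N. hh * (\<Sum>k<N. gg s C (real (Suc k) * hh))) \<longlonglongrightarrow> integral {0<..} (phi s C hh)"
  proof -
    have "\<And>N. integral {0<..} (psi s C hh N) = hh * (\<Sum>k<N. gg s C (real (Suc k) * hh))"
      using psi_int[OF hh(1)] by (rule integral_unique)
    thus ?thesis using mc by simp
  qed
  hence "(\<lambda>N. hh * (\<Sum>k<N. gg s C (real (Suc k) * hh)) / hh) \<longlonglongrightarrow> integral {0<..} (phi s C hh) / hh"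
    by (intro tendsto_divide tendsto_const) (use hh in auto)
  thus "(\<lambda>k. gg s C (real (Suc k) * hh)) sums (integral {0<..} (phi s C hh) / hh)"
    using hh by (simp add: sums_def)
qed




lemma riemann:
  assumes s: "s > -1" and C: "C > 0" and B: "B > 1"
  shows "\<And>j::nat. summable (\<lambda>k. gg s C (real (Suc k) * inverse (B powr real j)))"
    "(\<lambda>j::nat. inverse (B powr real j) * (\<Sum>k. gg s C (real (Suc k) * inverse (B powr real j))))
       \<longlonglongrightarrow> Gamma ((s+1)/2) / (2 * C powr ((s+1)/2))"
proof -
  define h where "h = (\<lambda>j::nat. inverse (B powr real j))"
  have hpos: "h j > 0" for j using B by (simp add: h_def)
  have hle: "h j \<le> 1" for j
  proof -
    have "1 \<le> B powr real j" using B by (intro ge_one_powr_ge_zero) auto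
    thus ?thesis unfolding h_def by (simp add: inverse_le_1_iff)
  qed
  have hlim: "h \<longlonglongrightarrow> 0"
  proof -
    have "h = (\<lambda>j. inverse (B ^ j))" using B by (simp add: h_def powr_realpow)
    thus ?thesis using LIMSEQ_inverse_realpow_zero[OF B] by simp
  qed
  note st = step[OF s C hpos hle]
  show "summable (\<lambda>k. gg s C (real (Suc k) * inverse (B powr real j)))" for j
    using st(2)[of j] by (auto simp: h_def sums_iff)
  have eqj: "h j * (\<Sum>k. gg s C (real (Suc k) * h j)) = integral {0<..} (phi s C (h j))" for j
    using st(2)[of j] hpos[of j] by (simp add: sums_iff)
  define D where "D = (\<lambda>x. (1 + 2 powr \<bar>s\<bar>) * gg s C x + 2 powr \<bar>s\<bar> * gg 0 C x)"
  have Dint: "D integrable_on {0<..}"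
    unfolding D_def using gg_integrable[OF s C] gg_integrable[of 0 C] C
    by (intro integrable_add integrable_on_mult_right) auto
  have conv: "(\<lambda>j. phi s C (h j) x) \<longlonglongrightarrow> gg s C x" if x: "x \<in> {0<..}" for x
  proof -
    have x0: "x > 0" using x by simp
    have "(\<lambda>j. h j * of_int \<lceil>x / h j\<rceil>) \<longlonglongrightarrow> x"
    proof (rule tendsto_sandwich[of "\<lambda>_. x" _ _ "\<lambda>j. x + h j"])
      show "eventually (\<lambda>j. x \<le> h j * of_int \<lceil>x / h j\<rceil>) sequentially"
        using phi_bounds(1)[OF hpos x0] by auto
      show "eventually (\<lambda>j. h j * of_int \<lceil>x / h j\<rceil> \<le> x + h j) sequentially"
        using phi_bounds(2)[OF hpos x0] by auto
      show "(\<lambda>j. x + h j) \<longlonglongrightarrow> x" using tendsto_add[OF tendsto_const hlim] by simp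
    qed simp
    moreover have "isCont (gg s C) x"
      unfolding gg_def using x0 by (auto intro!: continuous_intros)
    ultimately show ?thesis unfolding phi_def by (rule isCont_tendsto_compose[rotated])
  qed
  have "(\<lambda>j. integral {0<..} (phi s C (h j))) \<longlonglongrightarrow> integral {0<..} (gg s C)"
    by (rule dominated_convergence(2)[OF st(1) Dint _ conv]) (use st(3) in \<open>auto simp: D_def\<close>)
  thus "(\<lambda>j::nat. inverse (B powr real j) * (\<Sum>k. gg s C (real (Suc k) * inverse (B powr real j))))
       \<longlonglongrightarrow> Gamma ((s+1)/2) / (2 * C powr ((s+1)/2))"
    using eqj gint(2)[OF s C] by (simp add: h_def)
qed




lemma fp_pow:
  assumes x: "x > 0"
  shows "fp p x powr a = x powr (2 * a * p) * exp (- a * x\<^sup>2)"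
proof -
  have "fp p x powr a = (x powr (2 * p)) powr a * exp (- (x\<^sup>2)) powr a"
    unfolding fp_def using x by (auto intro: powr_mult)
  also have "\<dots> = x powr (2 * a * p) * exp (- a * x\<^sup>2)"
    by (simp add: powr_powr exp_powr_real algebra_simps)
  finally show ?thesis .
qed

lemma term1:
  assumes x: "x > 0" and b: "b > 0"
  shows "fp p x powr a * (x * b) powr n = b powr n * gg (2*a*p+n) a x"
proof -
  have "fp p x powr a * (x * b) powr n = x powr (2 * a * p) * exp (- a * x\<^sup>2) * (x powr n * b powr n)"
    using x b by (simp add: fp_pow powr_mult)
  also have "\<dots> = b powr n * ((x powr (2 * a * p) * x powr n) * exp (- a * x\<^sup>2))" by simp
  also have "x powr (2 * a * p) * x powr n = x powr (2*a*p+n)" by (simp add: powr_add)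
  finally show ?thesis by (simp add: gg_def)
qed

lemma term2:
  assumes x: "x > 0" and b: "b > 0" and c: "c > 0"
  shows "fp p x powr a1 * fp p (x * c) powr a2 * (x * b) powr n =
     c powr (2*a2*p) * b powr n * gg (2*(a1+a2)*p+n) (a1 + a2 * c\<^sup>2) x"
proof -
  have xc: "x * c > 0" using x c by simp
  have "fp p x powr a1 * fp p (x * c) powr a2 * (x * b) powr n =
     x powr (2 * a1 * p) * exp (- a1 * x\<^sup>2) * ((x powr (2 * a2 * p) * c powr (2 * a2 * p)) * exp (- a2 * (x * c)\<^sup>2))
       * (x powr n * b powr n)"
    using x b c by (simp add: fp_pow[OF x] fp_pow[OF xc] powr_mult)
  also have "\<dots> = c powr (2*a2*p) * b powr n * ((x powr (2 * a1 * p) * x powr (2 * a2 * p) * x powr n)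
       * (exp (- a1 * x\<^sup>2) * exp (- a2 * (x * c)\<^sup>2)))" by (simp add: algebra_simps)
  also have "x powr (2 * a1 * p) * x powr (2 * a2 * p) * x powr n = x powr (2*(a1+a2)*p+n)"
    by (simp add: powr_add[symmetric] algebra_simps)
  also have "exp (- a1 * x\<^sup>2) * exp (- a2 * (x * c)\<^sup>2) = exp (- (a1 + a2 * c\<^sup>2) * x\<^sup>2)"
    by (simp add: exp_add[symmetric] algebra_simps power_mult_distrib)
  finally show ?thesis by (simp add: gg_def)
qed

lemma final:
  fixes B n M T L :: real and S F G :: "nat \<Rightarrow> real"
  assumes B: "B > 1"
    and lim: "(\<lambda>j. inverse (B powr real j) * S j) \<longlonglongrightarrow> L"
    and F: "\<And>j. F j = M * (B powr real j) powr n * S j"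
    and G: "\<And>j. G j = B powr ((n+1) * real j) * (M * L)"
  shows "(\<lambda>j. F j - G j) \<in> o[at_top](\<lambda>j. B powr ((n+1) * real j))"
proof (rule smalloI_tendsto)
  show "\<forall>\<^sub>F j in at_top. B powr ((n + 1) * real j) \<noteq> 0" using B by simp
  have eq: "(F j - G j) / B powr ((n + 1) * real j) = M * (inverse (B powr real j) * S j) - M * L" for j
  proof -
    have "(B powr real j) powr n = B powr (n * real j)" by (simp add: powr_powr mult.commute)
    moreover have "B powr ((n + 1) * real j) = B powr (n * real j) * B powr real j"
      by (simp add: powr_add[symmetric] algebra_simps)
    ultimately show ?thesis using B unfolding F G by (simp add: field_simps)
  qed
  have "(\<lambda>j. M * (inverse (B powr real j) * S j) - M * L) \<longlonglongrightarrow> M * L - M * L"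
    by (intro tendsto_intros lim)
  thus "((\<lambda>j. (F j - G j) / B powr ((n + 1) * real j)) \<longlongrightarrow> 0) at_top"
    unfolding eq by simp
qed




lemma tau_id:
  fixes B n p a1 a2 :: real and dj :: int
  assumes B: "B > 1" and a1: "a1 > 0" and a2: "a2 > 0"
  defines "A \<equiv> (a1 + a2) * p + (n + 1) / 2"
  shows "tau B n p a1 a2 dj / (a1 + a2) powr A =
         (B powr (- of_int dj)) powr (2 * a2 * p) / (a1 + a2 * (B powr (- of_int dj))\<^sup>2) powr A"
proof -
  define d where "d = (of_int dj :: real)"
  define u where "u = B powr d"
  define v where "v = B powr (- d)"
  have u: "u > 0" and v: "v > 0" using B by (auto simp: u_def v_def)
  have uv: "u * v = 1" using B by (simp add: u_def v_def powr_add[symmetric])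
  define Q where "Q = a1 * u + a2 * v"
  have Q: "Q > 0" using a1 a2 u v by (simp add: Q_def add_pos_pos)
  have "v * Q = a1 * (u * v) + a2 * v\<^sup>2" by (simp add: Q_def algebra_simps power2_eq_square)
  hence CQ: "a1 + a2 * v\<^sup>2 = v * Q" using uv by simp
  have S: "a1 + a2 > 0" using a1 a2 by simp
  define E where "E = (a1 - a2) * p + (n + 1) / 2"
  have tau: "tau B n p a1 a2 dj = (Q / (a1 + a2)) powr (- A) * B powr (d * E)"
    by (simp add: tau_def Q_def u_def v_def d_def A_def E_def)
  have "(Q / (a1 + a2)) powr (- A) = (a1 + a2) powr A / Q powr A"
    using Q S by (simp add: powr_minus powr_divide)
  hence lhs: "tau B n p a1 a2 dj / (a1 + a2) powr A = B powr (d * E) / Q powr A"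
    using S by (simp add: tau)
  have "(a1 + a2 * v\<^sup>2) powr A = v powr A * Q powr A"
    unfolding CQ using v Q by (auto intro: powr_mult)
  moreover have "v powr (2 * a2 * p) = B powr (d * E) * v powr A"
  proof -
    have "B powr (d * E) * v powr A = B powr (d * E) * B powr (- d * A)"
      using B by (simp add: v_def powr_powr)
    also have "\<dots> = B powr (d * E + - d * A)" by (simp only: powr_add)
    also have "d * E + - d * A = - d * (2 * a2 * p)"
      by (simp add: E_def A_def field_simps)
    finally have "B powr (d * E) * v powr A = B powr (- d * (2 * a2 * p))" .
    also have "\<dots> = v powr (2 * a2 * p)" by (simp add: v_def powr_powr)
    finally show ?thesis by simp
  qed
  ultimately have rhs: "v powr (2 * a2 * p) / (a1 + a2 * v\<^sup>2) powr A = B powr (d * E) / Q powr A"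
    using v Q by (simp add: divide_simps)
  show ?thesis using lhs rhs by (simp add: v_def d_def)
qed




theorem lemma19:
  fixes B p n :: real
  assumes "B > 1" and "p > 0"
  shows "(\<forall>a::real. a > 0 \<longrightarrow> 2 * a * p + n > -1 \<longrightarrow>
            (\<forall>j::nat. summable (\<lambda>k::nat. fp p (real (Suc k) / B powr real j) powr a
                                         * real (Suc k) powr n))
          \<and> (\<lambda>j::nat. (\<Sum>k. fp p (real (Suc k) / B powr real j) powr a * real (Suc k) powr n)
                 - B powr ((n + 1) * real j) / (2 * a powr (a * p + (n + 1) / 2))
                   * Gamma (a * p + (n + 1) / 2))
             \<in> o[at_top](\<lambda>j. B powr ((n + 1) * real j)))
      \<and> (\<forall>a1 a2::real. \<forall>dj::int. a1 > 0 \<longrightarrow> a2 > 0 \<longrightarrow> 2 * (a1 + a2) * p + n > -1 \<longrightarrow>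
            (\<forall>j::nat. summable (\<lambda>k::nat. fp p (real (Suc k) / B powr real j) powr a1
                   * fp p (real (Suc k) / B powr (real j + of_int dj)) powr a2
                   * real (Suc k) powr n))
          \<and> (\<lambda>j::nat. (\<Sum>k. fp p (real (Suc k) / B powr real j) powr a1
                   * fp p (real (Suc k) / B powr (real j + of_int dj)) powr a2
                   * real (Suc k) powr n)
                 - B powr ((n + 1) * real j) * tau B n p a1 a2 dj
                   / (2 * (a1 + a2) powr ((a1 + a2) * p + (n + 1) / 2))
                   * Gamma ((a1 + a2) * p + (n + 1) / 2))
             \<in> o[at_top](\<lambda>j. B powr ((n + 1) * real j)))"
proof (intro conjI allI impI)
  have B: "B > 1" by fact
  have B0: "B > 0" using B by simp
  fix a :: real assume a: "a > 0" and hs: "2 * a * p + n > -1"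
  define s where "s = 2 * a * p + n"
  have s: "s > -1" using hs by (simp add: s_def)
  note R = riemann[OF s a B]
  define S where "S j = (\<Sum>k. gg s a (real (Suc k) * inverse (B powr real j)))" for j :: nat
  have tm: "fp p (real (Suc k) / B powr real j) powr a * real (Suc k) powr n =
      (B powr real j) powr n * gg s a (real (Suc k) * inverse (B powr real j))" for j k
  proof -
    define x where "x = real (Suc k) * inverse (B powr real j)"
    have x: "x > 0" using B0 by (simp add: x_def)
    have 1: "real (Suc k) / B powr real j = x" by (simp add: x_def divide_inverse)
    have 2: "real (Suc k) = x * B powr real j" using B0 by (simp add: x_def)
    have Bj: "B powr real j > 0" using B0 by simp
    have "fp p (real (Suc k) / B powr real j) powr a * real (Suc k) powr n
        = fp p x powr a * (x * B powr real j) powr n" by (metis 1 2)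
    also have "\<dots> = (B powr real j) powr n * gg s a x" using term1[OF x Bj] by (simp add: s_def)
    finally show ?thesis by (simp only: x_def)
  qed
  show "summable (\<lambda>k. fp p (real (Suc k) / B powr real j) powr a * real (Suc k) powr n)" for j
    unfolding tm by (intro summable_mult R(1))
  have "(\<lambda>j. (\<Sum>k. fp p (real (Suc k) / B powr real j) powr a * real (Suc k) powr n)
                 - B powr ((n + 1) * real j) / (2 * a powr (a * p + (n + 1) / 2))
                   * Gamma (a * p + (n + 1) / 2)) \<in> o[at_top](\<lambda>j. B powr ((n + 1) * real j))"
  proof (rule final[where M=1, OF B R(2)[folded S_def]])
    show "(\<Sum>k. fp p (real (Suc k) / B powr real j) powr a * real (Suc k) powr n) =
        1 * (B powr real j) powr n * S j" for j
      unfolding tm S_def using R(1) by (simp add: suminf_mult)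
    have e: "(s + 1) / 2 = a * p + (n + 1) / 2" by (simp add: s_def field_simps)
    show "B powr ((n + 1) * real j) / (2 * a powr (a * p + (n + 1) / 2)) * Gamma (a * p + (n + 1) / 2)
        = B powr ((n + 1) * real j) * (1 * (Gamma ((s + 1) / 2) / (2 * a powr ((s + 1) / 2))))" for j
      unfolding e by simp
  qed
  thus "(\<lambda>j. (\<Sum>k. fp p (real (Suc k) / B powr real j) powr a * real (Suc k) powr n)
                 - B powr ((n + 1) * real j) / (2 * a powr (a * p + (n + 1) / 2))
                   * Gamma (a * p + (n + 1) / 2)) \<in> o[at_top](\<lambda>j. B powr ((n + 1) * real j))" .
next
  have B: "B > 1" by fact
  have B0: "B > 0" using B by simp
  fix a1 a2 :: real and dj :: int
  assume a1: "a1 > 0" and a2: "a2 > 0" and hs: "2 * (a1 + a2) * p + n > -1"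
  define s where "s = 2 * (a1 + a2) * p + n"
  have s: "s > -1" using hs by (simp add: s_def)
  define c where "c = B powr (- of_int dj)"
  have c: "c > 0" using B0 by (simp add: c_def)
  define C where "C = a1 + a2 * c\<^sup>2"
  have C: "C > 0" using a1 a2 c by (simp add: C_def add_pos_nonneg)
  note R = riemann[OF s C B]
  define S where "S j = (\<Sum>k. gg s C (real (Suc k) * inverse (B powr real j)))" for j :: nat
  define M where "M = c powr (2 * a2 * p)"
  have tm: "fp p (real (Suc k) / B powr real j) powr a1
                   * fp p (real (Suc k) / B powr (real j + of_int dj)) powr a2
                   * real (Suc k) powr n =
      M * (B powr real j) powr n * gg s C (real (Suc k) * inverse (B powr real j))" for j k
  proof -
    define x where "x = real (Suc k) * inverse (B powr real j)"
    have x: "x > 0" using B0 by (simp add: x_def)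
    have 1: "real (Suc k) / B powr real j = x" by (simp add: x_def divide_inverse)
    have 3: "real (Suc k) / B powr (real j + of_int dj) = x * c"
      using B0 by (simp add: x_def c_def powr_add powr_minus divide_inverse)
    have 2: "real (Suc k) = x * B powr real j" using B0 by (simp add: x_def)
    have Bj: "B powr real j > 0" using B0 by simp
    have "fp p (real (Suc k) / B powr real j) powr a1
                   * fp p (real (Suc k) / B powr (real j + of_int dj)) powr a2
                   * real (Suc k) powr n
        = fp p x powr a1 * fp p (x * c) powr a2 * (x * B powr real j) powr n" by (metis 1 2 3)
    also have "\<dots> = M * (B powr real j) powr n * gg s C x"
      using term2[OF x Bj c] by (simp add: s_def M_def C_def)
    finally show ?thesis by (simp only: x_def)
  qed
  show "summable (\<lambda>k. fp p (real (Suc k) / B powr real j) powr a1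
                   * fp p (real (Suc k) / B powr (real j + of_int dj)) powr a2
                   * real (Suc k) powr n)" for j
    unfolding tm by (intro summable_mult R(1))
  define A where "A = (a1 + a2) * p + (n + 1) / 2"
  have e: "(s + 1) / 2 = A" by (simp add: s_def A_def field_simps)
  have T: "tau B n p a1 a2 dj / (a1 + a2) powr A = M / C powr A"
    using tau_id[OF B a1 a2, of n p dj] by (simp add: A_def M_def C_def c_def)
  show "(\<lambda>j. (\<Sum>k. fp p (real (Suc k) / B powr real j) powr a1
                   * fp p (real (Suc k) / B powr (real j + of_int dj)) powr a2
                   * real (Suc k) powr n)
                 - B powr ((n + 1) * real j) * tau B n p a1 a2 dj
                   / (2 * (a1 + a2) powr ((a1 + a2) * p + (n + 1) / 2))
                   * Gamma ((a1 + a2) * p + (n + 1) / 2))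
             \<in> o[at_top](\<lambda>j. B powr ((n + 1) * real j))"
  proof (rule final[where M=M, OF B R(2)[folded S_def]])
    show "(\<Sum>k. fp p (real (Suc k) / B powr real j) powr a1
                   * fp p (real (Suc k) / B powr (real j + of_int dj)) powr a2
                   * real (Suc k) powr n) = M * (B powr real j) powr n * S j" for j
      unfolding tm S_def using R(1) by (simp add: suminf_mult)
    show "B powr ((n + 1) * real j) * tau B n p a1 a2 dj
                   / (2 * (a1 + a2) powr ((a1 + a2) * p + (n + 1) / 2))
                   * Gamma ((a1 + a2) * p + (n + 1) / 2)
        = B powr ((n + 1) * real j) * (M * (Gamma ((s + 1) / 2) / (2 * C powr ((s + 1) / 2))))" for j
    proof -
      have "B powr ((n + 1) * real j) * tau B n p a1 a2 dj / (2 * (a1 + a2) powr A) * Gamma A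
          = B powr ((n + 1) * real j) * (tau B n p a1 a2 dj / (a1 + a2) powr A) * Gamma A / 2"
        by simp
      also have "\<dots> = B powr ((n + 1) * real j) * (M * (Gamma A / (2 * C powr A)))"
        unfolding T by simp
      finally show ?thesis unfolding e A_def .
    qed
  qed
qed


end
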